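(* Let $(S,\ast)$ be an adequate commutative partial semigroup and let $A$ be a $J_\delta$-set in $S$. Let $F\in\mathcal{P}_f(\mathcal{T}_S)$ and let $\langle H_n\rangle_{n=1}^\infty$ be a sequence in $\mathcal{P}_f(\mathbb{N})$ such that $\max H_n<\min H_{n+1}$ for each $n$. Then for every $W\in\mathcal{P}_f(S)$ there exist $a\in\sigma_S(W)$ and $G\in\mathcal{P}_f(\mathbb{N})$ such that for all $f\in F$, $\prod_{k\in G}\prod_{t\in H_k}f(t)\in\sigma_S(W\ast a)$ and $a\ast\prod_{k\in G}\prod_{t\in H_k}f(t)\in A$.
   Context: A partial semigroup is a pair $(S,\ast)$ where $\ast$ is an operation defined on a subset of $S\times S$ such that for all $x,y,z\in S$, $(x\ast y)\ast z=x\ast(y\ast z)$ in the sense that if either side is defined, so is the other and they are equal; it is commutative if $x\ast y=y\ast x$ whenever defined. For $s\in S$, $\phi_S(s)=\{t\in S: s\ast t\text{ is defined}\}$; for $H\in\mathcal{P}_f(S)$ (finite nonempty subsets), $\sigma_S(H)=\bigcap_{s\in H}\phi_S(s)$. $(S,\ast)$ is adequate if $\sigma_S(H)\ne\emptyset$ for all $H\in\mathcal{P}_f(S)$. A sequence $\langle y_n\rangle$ in $S$ is adequate if $\prod_{n\in F}y_n$ is defined for every $F\in\mathcal{P}_f(\mathbb{N})$ and for every $K\in\mathcal{P}_f(S)$ there is $m$ with $\prod_{n\in F}y_n\in\sigma_S(K)$ for all $F\in\mathcal{P}_f(\mathbb{N})$ with $\min F\ge m$. $\mathcal{T}_S$ is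 the set of all adequate sequences in $S$. For $W\in\mathcal{P}_f(S)$ and $a\in S$, $W\ast a=\{w\ast a: w\in W,\ w\ast a\text{ defined}\}$. A set $A\subseteq S$ is a $J_\delta$-set if for every $F\in\mathcal{P}_f(\mathcal{T}_S)$ and $W\in\mathcal{P}_f(S)$ there exist $a\in\sigma_S(W)$ and $H\in\mathcal{P}_f(\mathbb{N})$ such that for each $f\in F$, $\prod_{t\in H}f(t)\in\sigma_S(W\ast a)$ and $a\ast\prod_{t\in H}f(t)\in A$. *)

theory Defs
  imports Main
begin

text \<open>A partial operation on the type 'a (which plays the role of S) is a function
  'a \<Rightarrow> 'a \<Rightarrow> 'a option; None means undefined.\<close>

definition partial_semigroup :: "('a \<Rightarrow> 'a \<Rightarrow> 'a option) \<Rightarrow> bool" where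
  "partial_semigroup op \<longleftrightarrow>
     (\<forall>x y z. Option.bind (op x y) (\<lambda>u. op u z) = Option.bind (op y z) (\<lambda>v. op x v))"

definition commutative_ps :: "('a \<Rightarrow> 'a \<Rightarrow> 'a option) \<Rightarrow> bool" where
  "commutative_ps op \<longleftrightarrow> (\<forall>x y. op x y = op y x)"

definition phiS :: "('a \<Rightarrow> 'a \<Rightarrow> 'a option) \<Rightarrow> 'a \<Rightarrow> 'a set" where
  "phiS op s = {t. op s t \<noteq> None}"

definition sigmaS :: "('a \<Rightarrow> 'a \<Rightarrow> 'a option) \<Rightarrow> 'a set \<Rightarrow> 'a set" where
  "sigmaS op H = (\<Inter>s\<in>H. phiS op s)"

definition adequate_ps :: "('a \<Rightarrow> 'a \<Rightarrow> 'a option) \<Rightarrow> bool" where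
  "adequate_ps op \<longleftrightarrow> (\<forall>H. finite H \<and> H \<noteq> {} \<longrightarrow> sigmaS op H \<noteq> {})"

fun plist :: "('a \<Rightarrow> 'a \<Rightarrow> 'a option) \<Rightarrow> 'a list \<Rightarrow> 'a option" where
  "plist op [] = None"
| "plist op [x] = Some x"
| "plist op (x # y # xs) = Option.bind (plist op (y # xs)) (\<lambda>p. op x p)"

definition pprod :: "('a \<Rightarrow> 'a \<Rightarrow> 'a option) \<Rightarrow> nat set \<Rightarrow> (nat \<Rightarrow> 'a) \<Rightarrow> 'a option" where
  "pprod op F y = plist op (map y (sorted_list_of_set F))"

definition adequate_seq :: "('a \<Rightarrow> 'a \<Rightarrow> 'a option) \<Rightarrow> (nat \<Rightarrow> 'a) \<Rightarrow> bool" where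
  "adequate_seq op y \<longleftrightarrow>
     (\<forall>F. finite F \<and> F \<noteq> {} \<longrightarrow> pprod op F y \<noteq> None) \<and>
     (\<forall>K. finite K \<and> K \<noteq> {} \<longrightarrow>
        (\<exists>m. \<forall>F. finite F \<and> F \<noteq> {} \<and> Min F \<ge> m \<longrightarrow>
           (\<exists>p. pprod op F y = Some p \<and> p \<in> sigmaS op K)))"

definition TS :: "('a \<Rightarrow> 'a \<Rightarrow> 'a option) \<Rightarrow> (nat \<Rightarrow> 'a) set" where
  "TS op = {y. adequate_seq op y}"

definition Wmul :: "('a \<Rightarrow> 'a \<Rightarrow> 'a option) \<Rightarrow> 'a set \<Rightarrow> 'a \<Rightarrow> 'a set" where
  "Wmul op W a = {c. \<exists>w\<in>W. op w a = Some c}"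

definition Jdelta :: "('a \<Rightarrow> 'a \<Rightarrow> 'a option) \<Rightarrow> 'a set \<Rightarrow> bool" where
  "Jdelta op A \<longleftrightarrow>
     (\<forall>F W. finite F \<and> F \<noteq> {} \<and> F \<subseteq> TS op \<and> finite W \<and> W \<noteq> {} \<longrightarrow>
        (\<exists>a\<in>sigmaS op W. \<exists>H. finite H \<and> H \<noteq> {} \<and>
           (\<forall>f\<in>F. \<exists>p. pprod op H f = Some p \<and> p \<in> sigmaS op (Wmul op W a) \<and>
                     (\<exists>c. op a p = Some c \<and> c \<in> A))))"

end

theory Submission
  imports Defs
begin

lemma plist_append:
  assumes ps: "partial_semigroup op"
  shows "xs \<noteq> [] \<Longrightarrow> ys \<noteq> [] \<Longrightarrow>
    plist op (xs @ ys) = Option.bind (plist op xs) (\<lambda>p. Option.bind (plist op ys) (\<lambda>q. op p q))"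
proof (induction xs rule: induct_list012)
  case 1
  then show ?case by simp
next
  case (2 x)
  then show ?case by (cases ys) auto
next
  case (3 x y xs)
  have A: "\<And>x p q. Option.bind (op x p) (\<lambda>u. op u q) = Option.bind (op p q) (\<lambda>v. op x v)"
    using ps unfolding partial_semigroup_def by simp
  show ?case
    using 3 A
    by (cases "plist op (y # xs)"; cases "plist op ys"; simp)
qed

lemma plist_concat:
  assumes ps: "partial_semigroup op"
  shows "Ls \<noteq> [] \<Longrightarrow> (\<forall>L\<in>set Ls. L \<noteq> [] \<and> plist op L \<noteq> None) \<Longrightarrow>
    plist op (concat Ls) = plist op (map (\<lambda>L. the (plist op L)) Ls)"
proof (induction Ls rule: induct_list012)
  case 1 then show ?case by simp
next
  case (2 L) then show ?case by auto
next
  case (3 L L' Ls)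
  have ne: "concat (L' # Ls) \<noteq> []" using 3 by auto
  have "plist op (concat (L # L' # Ls)) =
     Option.bind (plist op L) (\<lambda>p. Option.bind (plist op (concat (L' # Ls))) (\<lambda>q. op p q))"
    using plist_append[OF ps, of L "concat (L' # Ls)"] 3(3,4) ne by simp
  also have "\<dots> = Option.bind (plist op L) (\<lambda>p. Option.bind (plist op (map (\<lambda>L. the (plist op L)) (L' # Ls))) (\<lambda>q. op p q))"
    using 3 by simp
  finally show ?case using 3(4) by (cases "plist op L") auto
qed

lemma blocks_lt:
  fixes H :: "nat \<Rightarrow> nat set"
  assumes H: "\<forall>n. finite (H n) \<and> H n \<noteq> {}"
    and M: "\<forall>n. Max (H n) < Min (H (Suc n))"
  shows "i < j \<Longrightarrow> Max (H i) < Min (H (j::nat))"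
proof (induction j)
  case 0 then show ?case by simp
next
  case (Suc j)
  have "Min (H j) \<le> Max (H j)" using H by (meson Max_ge Min_le all_not_in_conv order.trans)
  then show ?case using Suc M by (metis less_Suc_eq order.strict_trans order.strict_trans1)
qed

lemma min_ge:
  fixes H :: "nat \<Rightarrow> nat set"
  assumes H: "\<forall>n. finite (H n) \<and> H n \<noteq> {}"
    and M: "\<forall>n. Max (H n) < Min (H (Suc n))"
  shows "n \<le> Min (H n)"
proof (induction n)
  case 0 then show ?case by simp
next
  case (Suc n)
  have "Min (H n) \<le> Max (H n)" using H by (meson Max_ge Min_le all_not_in_conv order.trans)
  then show ?case using Suc M[rule_format, of n] by linarith
qed

lemma sorted_concat_blocks:
  fixes H :: "nat \<Rightarrow> nat set"
  assumes H: "\<forall>n. finite (H n) \<and> H n \<noteq> {}"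
    and M: "\<forall>n. Max (H n) < Min (H (Suc n))"
  shows "sorted_wrt (<) ks \<Longrightarrow>
    sorted_wrt (<) (concat (map (\<lambda>k. sorted_list_of_set (H k)) (ks::nat list)))"
proof (induction ks)
  case Nil then show ?case by simp
next
  case (Cons k ks)
  have "\<forall>x\<in>H k. \<forall>j\<in>set ks. \<forall>y\<in>H j. x < y"
  proof (intro ballI)
    fix x j y assume "x \<in> H k" "j \<in> set ks" "y \<in> H j"
    then have "k < j" using Cons.prems by simp
    have "x \<le> Max (H k)" using H \<open>x \<in> H k\<close> by simp
    moreover have "Min (H j) \<le> y" using H \<open>y \<in> H j\<close> by simp
    ultimately show "x < y" using blocks_lt[OF H M \<open>k < j\<close>] by linarith
  qed
  then have "\<forall>x\<in>set (sorted_list_of_set (H k)). \<forall>y\<in>set (concat (map (\<lambda>k. sorted_list_of_set (H k)) ks)). x < y"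
    using H by simp
  moreover have "sorted_wrt (<) ks" using Cons.prems by simp
  ultimately show ?case using Cons.IH
    by (simp only: list.map concat.simps sorted_wrt_append strict_sorted_list_of_set)
qed

lemma sl_union:
  fixes H :: "nat \<Rightarrow> nat set"
  assumes H: "\<forall>n. finite (H n) \<and> H n \<noteq> {}"
    and M: "\<forall>n. Max (H n) < Min (H (Suc n))"
    and G: "finite G"
  shows "sorted_list_of_set (\<Union>k\<in>G. H k) =
    concat (map (\<lambda>k. sorted_list_of_set (H k)) (sorted_list_of_set G))"
proof -
  let ?l = "concat (map (\<lambda>k. sorted_list_of_set (H k)) (sorted_list_of_set G))"
  have s: "sorted_wrt (<) ?l"
    using sorted_concat_blocks[OF H M] G by simp
  have hh: "\<And>x. set (sorted_list_of_set (H x)) = H x" using H by simp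
  have st: "set ?l = (\<Union>k\<in>G. H k)" using G by (simp add: hh)
  have fin: "finite (\<Union>k\<in>G. H k)" using G H by simp
  have "?l = sorted_list_of_set (\<Union>k\<in>G. H k)"
    by (rule strict_sorted_equal[OF strict_sorted_list_of_set s]) (simp add: st fin hh G)
  then show ?thesis by (rule sym)
qed

theorem lemma3p2:
  fixes op :: "'a \<Rightarrow> 'a \<Rightarrow> 'a option" and A :: "'a set"
    and F :: "(nat \<Rightarrow> 'a) set" and H :: "nat \<Rightarrow> nat set"
  assumes "partial_semigroup op" and "commutative_ps op" and "adequate_ps op"
    and "Jdelta op A"
    and "finite F" and "F \<noteq> {}" and "F \<subseteq> TS op"
    and "\<forall>n. finite (H n) \<and> H n \<noteq> {}"
    and "\<forall>n. Max (H n) < Min (H (Suc n))"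
  shows "\<forall>W. finite W \<and> W \<noteq> {} \<longrightarrow>
           (\<exists>a\<in>sigmaS op W. \<exists>G. finite G \<and> G \<noteq> {} \<and>
              (\<forall>f\<in>F. \<exists>p. pprod op G (\<lambda>k. the (pprod op (H k) f)) = Some p \<and>
                        p \<in> sigmaS op (Wmul op W a) \<and>
                        (\<exists>c. op a p = Some c \<and> c \<in> A)))"
proof (intro allI impI)
  fix W :: "'a set" assume W: "finite W \<and> W \<noteq> {}"
  note ps = assms(1) and H = assms(8) and M = assms(9)
  define g where "g f = (\<lambda>k. the (pprod op (H k) f))" for f :: "nat \<Rightarrow> 'a"
  have key: "pprod op G (g f) = pprod op (\<Union>k\<in>G. H k) f"
    if f: "adequate_seq op f" and G: "finite G" "G \<noteq> {}" for f G
  proof -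
    have d0: "\<forall>F. finite F \<and> F \<noteq> {} \<longrightarrow> pprod op F f \<noteq> None"
      using f unfolding adequate_seq_def by (rule conjunct1)
    have def: "plist op (map f (sorted_list_of_set (H k))) \<noteq> None" for k
      using d0[rule_format, of "H k"] H unfolding pprod_def by simp
    have "pprod op (\<Union>k\<in>G. H k) f =
       plist op (concat (map (\<lambda>k. map f (sorted_list_of_set (H k))) (sorted_list_of_set G)))"
      unfolding pprod_def sl_union[OF H M G(1)] by (simp add: map_concat comp_def)
    also have "\<dots> = plist op (map (\<lambda>L. the (plist op L)) (map (\<lambda>k. map f (sorted_list_of_set (H k))) (sorted_list_of_set G)))"
    proof (rule plist_concat[OF ps])
      show "map (\<lambda>k. map f (sorted_list_of_set (H k))) (sorted_list_of_set G) \<noteq> []"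
        using G by simp
      show "\<forall>L\<in>set (map (\<lambda>k. map f (sorted_list_of_set (H k))) (sorted_list_of_set G)).
          L \<noteq> [] \<and> plist op L \<noteq> None"
        using H def by simp
    qed
    also have "\<dots> = pprod op G (g f)"
      unfolding pprod_def g_def by (simp add: comp_def)
    finally show ?thesis by simp
  qed
  have gTS: "g f \<in> TS op" if fF: "f \<in> F" for f
  proof -
    have f: "adequate_seq op f" using fF assms(7) unfolding TS_def by auto
    have un: "finite (\<Union>k\<in>G. H k) \<and> (\<Union>k\<in>G. H k) \<noteq> {}" if "finite G" "G \<noteq> {}" for G
      using that H by auto
    have p1: "\<forall>G. finite G \<and> G \<noteq> {} \<longrightarrow> pprod op G (g f) \<noteq> None"
      using key[OF f] un f unfolding adequate_seq_def by metis
    have p2: "\<exists>m. \<forall>G. finite G \<and> G \<noteq> {} \<and> Min G \<ge> m \<longrightarrow>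
           (\<exists>p. pprod op G (g f) = Some p \<and> p \<in> sigmaS op K)"
      if K: "finite K \<and> K \<noteq> {}" for K
    proof -
      obtain m where m: "\<forall>F. finite F \<and> F \<noteq> {} \<and> Min F \<ge> m \<longrightarrow>
           (\<exists>p. pprod op F f = Some p \<and> p \<in> sigmaS op K)"
        using f K unfolding adequate_seq_def by blast
      show ?thesis
      proof (intro exI[of _ m] allI impI)
        fix G :: "nat set" assume G: "finite G \<and> G \<noteq> {} \<and> m \<le> Min G"
        have "\<forall>x\<in>(\<Union>k\<in>G. H k). m \<le> x"
        proof
          fix x assume "x \<in> (\<Union>k\<in>G. H k)"
          then obtain k where k: "k \<in> G" "x \<in> H k" by auto
          have "Min G \<le> k" using G k by simp
          moreover have "k \<le> Min (H k)" by (rule min_ge[OF H M])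
          moreover have "Min (H k) \<le> x" using H k by simp
          ultimately show "m \<le> x" using G by linarith
        qed
        then have "m \<le> Min (\<Union>k\<in>G. H k)" using un[of G] G by simp
        then show "\<exists>p. pprod op G (g f) = Some p \<and> p \<in> sigmaS op K"
          using m un[of G] G key[OF f, of G] by metis
      qed
    qed
    show ?thesis unfolding TS_def adequate_seq_def using p1 p2 by blast
  qed
  have pre: "finite (g ` F) \<and> g ` F \<noteq> {} \<and> g ` F \<subseteq> TS op \<and> finite W \<and> W \<noteq> {}"
    using assms(5,6) gTS W by auto
  have "\<exists>a\<in>sigmaS op W. \<exists>G. finite G \<and> G \<noteq> {} \<and>
           (\<forall>h\<in>g ` F. \<exists>p. pprod op G h = Some p \<and> p \<in> sigmaS op (Wmul op W a) \<and>
                     (\<exists>c. op a p = Some c \<and> c \<in> A))"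
    using assms(4)[unfolded Jdelta_def, rule_format, OF pre] .
  then obtain a G where a: "a \<in> sigmaS op W" and G: "finite G" "G \<noteq> {}"
    and P: "\<forall>h\<in>g ` F. \<exists>p. pprod op G h = Some p \<and> p \<in> sigmaS op (Wmul op W a) \<and>
                     (\<exists>c. op a p = Some c \<and> c \<in> A)"
    by blast
  show "\<exists>a\<in>sigmaS op W. \<exists>G. finite G \<and> G \<noteq> {} \<and>
              (\<forall>f\<in>F. \<exists>p. pprod op G (\<lambda>k. the (pprod op (H k) f)) = Some p \<and>
                        p \<in> sigmaS op (Wmul op W a) \<and>
                        (\<exists>c. op a p = Some c \<and> c \<in> A))"
    using a G P unfolding g_def by blast
qed

end
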